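(* Let $r(n)$ be the Golay–Rudin–Shapiro sequence defined by $r(0)=1$, $r(2n)=r(n)$, $r(2n+1)=(-1)^n r(n)$. Then in the ring of formal power series $\mathbb{Z}[[z]]$, $$\sum_{k\ge 0}(-1)^k z^{2^k-1}=\cfrac{1}{1+\cfrac{r(0)r(2)z}{1+\cfrac{r(1)r(3)z}{1+\cfrac{r(2)r(4)z}{1+\cdots}}}}.$$
   Context: The infinite continued fraction $\frac{1}{1+\frac{c_0z}{1+\frac{c_1z}{1+\cdots}}}$ with $c_n=r(n)r(n+2)\in\{\pm1\}$ is understood as the formal power series limit of its finite truncations (the $N$-th truncation agrees with the limit up to order $z^N$). Explicitly the right-hand side is $\frac{1}{1+\frac{z}{1-\frac{z}{1+\frac{z}{1-\cdots}}}}$ at the start. *)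

theory Defs
  imports "HOL-Computational_Algebra.Formal_Power_Series"
begin

fun grs :: "nat \<Rightarrow> int" where
  "grs n = (if n = 0 then 1
            else if even n then grs (n div 2)
            else (-1) ^ (n div 2) * grs (n div 2))"

definition grs_c :: "nat \<Rightarrow> int" where
  "grs_c n = grs n * grs (n + 2)"

text \<open>Left-hand side: the integer power series sum over k of (-1)^k z^(2^k - 1).
  Since 2^k - 1 \<ge> k, only k \<le> n can contribute to the coefficient of z^n.\<close>
definition lhs_series :: "int fps" where
  "lhs_series = Abs_fps (\<lambda>n. \<Sum>k\<le>n. if 2 ^ k - 1 = n then (-1) ^ k else 0)"

fun cf_den :: "(nat \<Rightarrow> int) \<Rightarrow> nat \<Rightarrow> nat \<Rightarrow> rat fps" where
  "cf_den c m 0 = 1"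
| "cf_den c m (Suc N) = 1 + fps_const (of_int (c m)) * fps_X * inverse (cf_den c (Suc m) N)"

text \<open>N-th truncation  1/(1 + c0 z/(1 + c1 z/( ... /(1 + c_(N-1) z)))).\<close>
definition cf_trunc :: "(nat \<Rightarrow> int) \<Rightarrow> nat \<Rightarrow> rat fps" where
  "cf_trunc c N = inverse (cf_den c 0 N)"

definition fps_int_to_rat :: "int fps \<Rightarrow> rat fps" where
  "fps_int_to_rat f = Abs_fps (\<lambda>n. of_int (fps_nth f n))"

end

theory Submission
  imports Defs
begin
unbundle fps_syntax
declare grs.simps[simp del]

definition og :: "nat \<Rightarrow> rat fps \<Rightarrow> bool" where
  "og n f \<longleftrightarrow> (\<forall>i<n. f $ i = 0)"

lemma og_iff: "og n f \<longleftrightarrow> (\<exists>h. f = fps_X ^ n * h)"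
proof
  assume "og n f"
  then have "f = fps_X ^ n * fps_shift n f"
    by (intro fps_ext) (auto simp: og_def fps_X_power_mult_nth)
  then show "\<exists>h. f = fps_X ^ n * h" by blast
qed (auto simp: og_def fps_X_power_mult_nth)

lemma og_mult: "og n f \<Longrightarrow> og n (g * f)"
  by (auto simp: og_iff mult.left_commute)

lemma og_mult2: "og n f \<Longrightarrow> og n (f * g)"
  by (auto simp: og_iff mult.assoc)

lemma og_add: "og n f \<Longrightarrow> og n g \<Longrightarrow> og n (f + g)"
  by (auto simp: og_def)

lemma og_diff: "og n f \<Longrightarrow> og n g \<Longrightarrow> og n (f - g)"
  by (auto simp: og_def)

lemma og_minus: "og n f \<Longrightarrow> og n (- f)"
  by (auto simp: og_def)

lemma og_swap: "og n (f - g) \<Longrightarrow> og n (g - f)"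
  by (auto simp: og_def)

lemma og_mono: "og n f \<Longrightarrow> m \<le> n \<Longrightarrow> og m f"
  by (auto simp: og_def)

lemma og_X: "og n f \<Longrightarrow> og (Suc n) (fps_X * f)"
  by (auto simp: og_def)

lemma og_sq: "og n f \<Longrightarrow> og (2*n) (f oo fps_X^2)"
proof -
  assume "og n f"
  then obtain h where h: "f = fps_X ^ n * h" by (auto simp: og_iff)
  have "f oo fps_X^2 = (fps_X ^ n oo fps_X^2) * (h oo fps_X^2)"
    unfolding h by (rule fps_compose_mult_distrib) simp
  also have "fps_X ^ n oo fps_X^2 = ((fps_X^2)^n :: rat fps)"
    using fps_X_power_compose[where a="fps_X^2::rat fps" and k=n] by simp
  also have "\<dots> = fps_X^(2*n)" by (simp add: power_mult)
  finally show ?thesis by (auto simp: og_iff)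
qed

lemma den0: "cf_den c m N $ 0 = 1"
  by (cases N) auto

lemma inv_diff:
  fixes f g :: "rat fps"
  assumes "f $ 0 \<noteq> 0" "g $ 0 \<noteq> 0"
  shows "inverse f - inverse g = inverse f * inverse g * (g - f)"
proof -
  have "inverse f * inverse g * (g - f) = inverse f * (inverse g * g) - inverse g * (inverse f * f)"
    by (simp add: algebra_simps)
  also have "\<dots> = inverse f - inverse g"
    using assms by (simp add: inverse_mult_eq_1)
  finally show ?thesis by simp
qed

lemma og_inv: "og n (f - g) \<Longrightarrow> f $ 0 \<noteq> 0 \<Longrightarrow> g $ 0 \<noteq> 0 \<Longrightarrow> og n (inverse f - inverse g)"
  by (simp add: inv_diff og_mult og_swap)

lemma den_step: "og N (cf_den c m N - cf_den c m (Suc N))"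
proof (induction N arbitrary: m)
  case 0
  then show ?case by (simp add: og_def)
next
  case (Suc N)
  have "og N (inverse (cf_den c (Suc m) N) - inverse (cf_den c (Suc m) (Suc N)))"
    using Suc.IH by (intro og_inv) (simp_all add: den0)
  then have "og (Suc N) (fps_X * (inverse (cf_den c (Suc m) N) - inverse (cf_den c (Suc m) (Suc N))))"
    by (rule og_X)
  then have "og (Suc N) (fps_const (of_int (c m)) * (fps_X * (inverse (cf_den c (Suc m) N) - inverse (cf_den c (Suc m) (Suc N)))))"
    by (rule og_mult)
  then show ?case by (simp add: algebra_simps)
qed

lemma trunc_step: "og N (cf_trunc c N - cf_trunc c (Suc N))"
  unfolding cf_trunc_def by (intro og_inv den_step) (simp_all add: den0)

lemma trunc_mono: "N \<le> M \<Longrightarrow> og N (cf_trunc c N - cf_trunc c M)"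
proof (induction M rule: dec_induct)
  case base
  then show ?case by (simp add: og_def)
next
  case (step M)
  have "og N (cf_trunc c M - cf_trunc c (Suc M))"
    by (rule og_mono[OF trunc_step]) (use step.hyps in simp)
  from og_add[OF step.IH this] show ?case by simp
qed

lemma trunc0: "cf_trunc c N $ 0 = 1"
  by (simp add: cf_trunc_def den0)

definition mact :: "rat fps \<Rightarrow> int \<Rightarrow> rat fps \<times> rat fps \<Rightarrow> rat fps \<times> rat fps" where
  "mact w a v = (snd v, fps_const (of_int a) * w * fst v + snd v)"

fun vec :: "rat fps \<Rightarrow> (nat \<Rightarrow> int) \<Rightarrow> nat \<Rightarrow> nat \<Rightarrow> rat fps \<times> rat fps \<Rightarrow> rat fps \<times> rat fps" where
  "vec w c m 0 v = v"
| "vec w c m (Suc N) v = mact w (c m) (vec w c (Suc m) N v)"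

lemma vec_trunc:
  "fst (vec fps_X c m N (1,1)) = inverse (cf_den c m N) * snd (vec fps_X c m N (1,1)) \<and>
   snd (vec fps_X c m N (1,1)) $ 0 = 1"
proof (induction N arbitrary: m)
  case 0
  then show ?case by simp
next
  case (Suc N)
  define p where "p = fst (vec fps_X c (Suc m) N (1,1))"
  define q where "q = snd (vec fps_X c (Suc m) N (1,1))"
  have p: "p = inverse (cf_den c (Suc m) N) * q" and q0: "q $ 0 = 1"
    using Suc.IH[of "Suc m"] by (simp_all add: p_def q_def)
  define D where "D = cf_den c m (Suc N)"
  have D: "D = 1 + fps_const (of_int (c m)) * fps_X * inverse (cf_den c (Suc m) N)"
    by (simp add: D_def)
  have e: "fps_const (of_int (c m)) * fps_X * p + q = D * q"
    by (simp add: D p algebra_simps)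
  have D0: "D $ 0 \<noteq> 0" by (simp add: D_def den0)
  have "vec fps_X c m (Suc N) (1,1) = (q, D * q)"
    using e by (simp add: mact_def p_def q_def)
  moreover have "q = inverse D * (D * q)"
    using D0 by (simp add: mult.assoc[symmetric] inverse_mult_eq_1)
  ultimately show ?case using q0 by (simp add: D_def)
qed

lemma vec_last: "vec w c m (Suc N) v = vec w c m N (mact w (c (m+N)) v)"
  by (induction N arbitrary: m) auto

lemma vec_scale: "vec w c m N (a * p, a * q) = (a * fst (vec w c m N (p,q)), a * snd (vec w c m N (p,q)))"
  by (induction N arbitrary: m) (auto simp: mact_def algebra_simps)

lemma vec_sq: "vec (fps_X^2) c m N (p oo fps_X^2, q oo fps_X^2) =
   (fst (vec fps_X c m N (p,q)) oo fps_X^2, snd (vec fps_X c m N (p,q)) oo fps_X^2)"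
proof (induction N arbitrary: m)
  case 0
  then show ?case by simp
next
  case (Suc N)
  have X: "(fps_X :: rat fps) oo fps_X^2 = fps_X^2"
    using fps_X_power_compose[where a="fps_X^2::rat fps" and k=1] by simp
  show ?case
    by (simp add: Suc.IH mact_def fps_compose_add_distrib fps_compose_mult_distrib X)
qed

definition xm :: "nat \<Rightarrow> rat fps \<times> rat fps \<Rightarrow> rat fps \<times> rat fps" where
  "xm j v = (if even j then snd v - fst v else fst v - snd v, fps_X * snd v)"

lemma grs0: "grs 0 = 1"
  by (subst grs.simps) simp

lemma grs_pm: "grs n = 1 \<or> grs n = -1"
proof (induction n rule: less_induct)
  case (less n)
  show ?case
  proof (cases "n = 0")
    case True then show ?thesis by (simp add: grs0)
  next
    case False
    then have lt: "n div 2 < n" by simp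
    have e: "grs n = (if even n then grs (n div 2) else (-1)^(n div 2) * grs (n div 2))"
      using False by (subst grs.simps) simp
    from less[OF lt] show ?thesis
      unfolding e by (auto simp: minus_one_power_iff)
  qed
qed

lemma grs_sq: "grs n * grs n = 1"
  using grs_pm[of n] by auto

lemma grs_even: "grs (2*n) = grs n"
  by (cases "n = 0") (simp add: grs0, subst grs.simps, auto)

lemma grs_odd: "grs (2*n+1) = (-1)^n * grs n"
  by (subst grs.simps) auto

lemma grs_e: "k = 2*n \<Longrightarrow> grs k = grs n"
  using grs_even by simp

lemma grs_o: "k = 2*n+1 \<Longrightarrow> grs k = (-1)^n * grs n"
  using grs_odd by simp

lemma c4_0: "grs_c (4*m) = (-1)^m"
proof -
  have a: "grs (4*m) = grs (2*m)" by (rule grs_e) simp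
  have b: "grs (2*m) = grs m" by (rule grs_e) simp
  have c: "grs (4*m+2) = grs (2*m+1)" by (rule grs_e) simp
  have d: "grs (2*m+1) = (-1)^m * grs m" by (rule grs_o) simp
  show ?thesis using grs_sq[of m] unfolding grs_c_def a b c d by (simp add: algebra_simps)
qed

lemma c4_1: "grs_c (4*m+1) = -((-1)^m)"
proof -
  have a: "grs (4*m+1) = (-1)^(2*m) * grs (2*m)" by (rule grs_o) simp
  have b: "grs (2*m) = grs m" by (rule grs_e) simp
  have c: "grs (4*m+1+2) = (-1)^(2*m+1) * grs (2*m+1)" by (rule grs_o) simp
  have d: "grs (2*m+1) = (-1)^m * grs m" by (rule grs_o) simp
  show ?thesis using grs_sq[of m] unfolding grs_c_def a b c d by (simp add: algebra_simps)
qed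

lemma c4_2: "grs_c (4*m+2) = (-1)^m * (grs m * grs (m+1))"
proof -
  have a: "grs (4*m+2) = grs (2*m+1)" by (rule grs_e) simp
  have c: "grs (4*m+2+2) = grs (2*m+2)" by (rule grs_e) simp
  have d: "grs (2*m+1) = (-1)^m * grs m" by (rule grs_o) simp
  have e: "grs (2*m+2) = grs (m+1)" by (rule grs_e) simp
  show ?thesis unfolding grs_c_def a c d e by (simp add: algebra_simps)
qed

lemma c4_3: "grs_c (4*m+3) = -((-1)^m * (grs m * grs (m+1)))"
proof -
  have a: "grs (4*m+3) = (-1)^(2*m+1) * grs (2*m+1)" by (rule grs_o) simp
  have c: "grs (4*m+3+2) = (-1)^(2*m+2) * grs (2*m+2)" by (rule grs_o) simp
  have d: "grs (2*m+1) = (-1)^m * grs m" by (rule grs_o) simp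
  have e: "grs (2*m+2) = grs (m+1)" by (rule grs_e) simp
  show ?thesis unfolding grs_c_def a c d e by (simp add: algebra_simps)
qed

lemma c2_0: "grs_c (2*m) = grs m * grs (m+1)"
proof -
  have b: "grs (2*m) = grs m" by (rule grs_e) simp
  have e: "grs (2*m+2) = grs (m+1)" by (rule grs_e) simp
  show ?thesis unfolding grs_c_def b e by simp
qed

lemma c2_1: "grs_c (2*m+1) = -(grs m * grs (m+1))"
proof -
  have d: "grs (2*m+1) = (-1)^m * grs m" by (rule grs_o) simp
  have e: "grs (2*m+1+2) = (-1)^(m+1) * grs (m+1)" by (rule grs_o) simp
  show ?thesis using grs_sq[of m] unfolding grs_c_def d e by (simp add: algebra_simps)
qed

lemma fm1: "fps_const (- 1 :: rat) = - 1"
  by (metis fps_const_1_eq_1 fps_const_neg)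

lemma loc_abs:
  fixes s e :: int
  assumes "s = (-1)^m" "e = 1 \<or> e = -1"
  shows "xm m (mact fps_X s (mact fps_X (-s) (mact fps_X (s*e) (mact fps_X (-(s*e)) v)))) =
         mact (fps_X^2) e (mact (fps_X^2) (-e) (xm (Suc m) v))"
  using assms
  by (cases "even m"; cases "e = 1")
     (auto simp: mact_def xm_def algebra_simps power2_eq_square fm1)

lemma loc_grs:
  "xm m (mact fps_X (grs_c (4*m)) (mact fps_X (grs_c (4*m+1)) (mact fps_X (grs_c (4*m+2))
      (mact fps_X (grs_c (4*m+3)) v)))) =
   mact (fps_X^2) (grs_c (2*m)) (mact (fps_X^2) (grs_c (2*m+1)) (xm (Suc m) v))"
proof -
  have e: "grs m * grs (m+1) = 1 \<or> grs m * grs (m+1) = -1"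
    using grs_pm[of m] grs_pm[of "m+1"] by auto
  show ?thesis
    unfolding c4_0 c4_1 c4_2 c4_3 c2_0 c2_1
    using loc_abs[OF refl e, where v=v] by (simp add: algebra_simps)
qed

lemma vec4: "vec w c m (Suc (Suc (Suc (Suc N)))) v =
  mact w (c m) (mact w (c (m+1)) (mact w (c (m+2)) (mact w (c (m+3)) (vec w c (m+4) N v))))"
  by (simp add: eval_nat_numeral)

lemma vec2: "vec w c m (Suc (Suc N)) v = mact w (c m) (mact w (c (m+1)) (vec w c (m+2) N v))"
  by (simp add: eval_nat_numeral)

lemma vec_ind:
  "xm m (vec fps_X grs_c (4*m) (4*K) v) = vec (fps_X^2) grs_c (2*m) (2*K) (xm (m+K) v)"
proof (induction K arbitrary: m)
  case 0
  then show ?case by simp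
next
  case (Suc K)
  have a: "4 * Suc K = Suc (Suc (Suc (Suc (4*K))))" by simp
  have b: "2 * Suc K = Suc (Suc (2*K))" by simp
  have c: "Suc (Suc (Suc (Suc (4*m)))) = 4 * Suc m" by simp
  have d: "Suc (Suc (2*m)) = 2 * Suc m" by simp
  have e: "Suc m + K = m + Suc K" by simp
  have c4: "4*m+4 = 4 * Suc m" by simp
  have d2: "2*m+2 = 2 * Suc m" by simp
  have "xm m (vec fps_X grs_c (4*m) (4*Suc K) v) =
    xm m (mact fps_X (grs_c (4*m)) (mact fps_X (grs_c (4*m+1)) (mact fps_X (grs_c (4*m+2))
      (mact fps_X (grs_c (4*m+3)) (vec fps_X grs_c (4 * Suc m) (4 * K) v)))))"
    unfolding a vec4 c4 ..
  also have "\<dots> = mact (fps_X^2) (grs_c (2*m)) (mact (fps_X^2) (grs_c (2*m+1))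
      (vec (fps_X^2) grs_c (2 * Suc m) (2 * K) (xm (Suc m + K) v)))"
    unfolding loc_grs Suc.IH ..
  also have "\<dots> = vec (fps_X^2) grs_c (2*m) (2*Suc K) (xm (m + Suc K) v)"
    unfolding b vec2 d2 e ..
  finally show ?case .
qed

lemma key:
  assumes "K \<ge> 1"
  shows "cf_trunc grs_c (4*K) = 1 - fps_X * (cf_trunc grs_c (2*K-1) oo fps_X^2)"
proof -
  define A where "A = fst (vec fps_X grs_c 0 (4*K) (1,1))"
  define B where "B = snd (vec fps_X grs_c 0 (4*K) (1,1))"
  define a where "a = fst (vec fps_X grs_c 0 (2*K-1) (1,1))"
  define b where "b = snd (vec fps_X grs_c 0 (2*K-1) (1,1))"
  have AB: "A = cf_trunc grs_c (4*K) * B" "B $ 0 = 1"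
    using vec_trunc[of grs_c 0 "4*K"] by (simp_all add: A_def B_def cf_trunc_def)
  have ab: "a = cf_trunc grs_c (2*K-1) * b"
    using vec_trunc[of grs_c 0 "2*K-1"] by (simp_all add: a_def b_def cf_trunc_def)
  have x1: "xm (0+K) (1,1) = (fps_X * 0, fps_X * 1)" by (simp add: xm_def)
  have s: "2*K = Suc (2*K-1)" using assms by simp
  have m01: "mact (fps_X^2) (grs_c (0 + (2*K-1))) (0,1) = (1 oo fps_X^2, 1 oo fps_X^2)"
    by (simp add: mact_def)
  have "xm 0 (vec fps_X grs_c (4*0) (4*K) (1,1)) = vec (fps_X^2) grs_c (2*0) (2*K) (xm (0+K) (1,1))"
    by (rule vec_ind)
  also have "\<dots> = (fps_X * fst (vec (fps_X^2) grs_c 0 (2*K) (0,1)), fps_X * snd (vec (fps_X^2) grs_c 0 (2*K) (0,1)))"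
    unfolding x1 vec_scale by simp
  also have "vec (fps_X^2) grs_c 0 (2*K) (0,1) = (a oo fps_X^2, b oo fps_X^2)"
    unfolding a_def b_def by (subst s, subst vec_last, subst m01, subst vec_sq) simp
  finally have e0: "xm 0 (vec fps_X grs_c 0 (4*K) (1,1)) = (fps_X * (a oo fps_X^2), fps_X * (b oo fps_X^2))"
    by simp
  have x0: "xm 0 (vec fps_X grs_c 0 (4*K) (1,1)) = (B - A, fps_X * B)"
    by (simp add: xm_def A_def B_def)
  have e: "B - A = fps_X * (a oo fps_X^2)" "fps_X * B = fps_X * (b oo fps_X^2)"
    using e0 unfolding x0 by (simp_all only: prod.inject)
  from e(2) have eB: "B = b oo fps_X^2" by simp
  have comp: "a oo fps_X^2 = (cf_trunc grs_c (2*K-1) oo fps_X^2) * B"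
    unfolding ab eB by (rule fps_compose_mult_distrib) simp
  have "cf_trunc grs_c (4*K) * B = (1 - fps_X * (cf_trunc grs_c (2*K-1) oo fps_X^2)) * B"
    using e(1) AB(1) comp by (simp add: algebra_simps)
  moreover have "B \<noteq> 0" using AB(2) by auto
  ultimately show ?thesis by simp
qed

lemma sq_nth: "(f oo fps_X^2) $ n = (if even n then f $ (n div 2) else (0::rat))"
proof -
  have "(f oo fps_X^2) $ n = (\<Sum>i=0..n. if even n \<and> i = n div 2 then f $ i else 0)"
    unfolding fps_compose_nth
  proof (rule sum.cong)
    fix i assume "i \<in> {0..n}"
    have "(fps_X^2)^i = (fps_X^(2*i) :: rat fps)" by (simp add: power_mult)
    then show "f $ i * ((fps_X^2)^i) $ n = (if even n \<and> i = n div 2 then f $ i else 0)"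
      by auto
  qed simp
  also have "\<dots> = (if even n then (\<Sum>i=0..n. if i = n div 2 then f $ i else 0) else 0)"
    by auto
  also have "\<dots> = (if even n then f $ (n div 2) else 0)"
    by (simp add: sum.delta')
  finally show ?thesis .
qed

definition LL :: "nat \<Rightarrow> nat \<Rightarrow> int" where
  "LL M n = (\<Sum>k\<le>M. if 2^k - 1 = n then (-1)^k else 0)"

lemma LL_ext: assumes nM: "n \<le> M" shows "LL M n = LL n n"
  unfolding LL_def
proof (rule sum.mono_neutral_right)
  show "\<forall>k\<in>{..M} - {..n}. (if 2^k - 1 = n then (-1)^k else 0) = (0::int)"
  proof
    fix k assume "k \<in> {..M} - {..n}"
    then have "n < k" by auto
    moreover have "k < 2^k" by simp
    ultimately have "2^k - 1 \<noteq> n" by linarith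
    then show "(if 2^k - 1 = n then (-1)^k else 0) = (0::int)" by simp
  qed
qed (use nM in auto)

lemma arith2: assumes "(p::nat) \<ge> 1" shows "(2*p - 1 = Suc n) = (even n \<and> p - 1 = n div 2)"
proof
  assume h: "2*p - 1 = Suc n"
  then have "n = 2*(p-1)" using assms by simp
  then show "even n \<and> p - 1 = n div 2" by simp
next
  assume h: "even n \<and> p - 1 = n div 2"
  then obtain j where "n = 2*j" by blast
  with h assms show "2*p - 1 = Suc n" by simp
qed

lemma LL_suc: "LL (Suc n) (Suc n) = - (if even n then LL (n div 2) (n div 2) else 0)"
proof -
  have "LL (Suc n) (Suc n) = (\<Sum>k\<le>n. if 2^(Suc k) - 1 = Suc n then (-1)^(Suc k) else (0::int))"
    unfolding LL_def by (subst sum.atMost_Suc_shift) (simp del: power_Suc)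
  also have "\<dots> = (\<Sum>k\<le>n. - (if even n then (if 2^k - 1 = n div 2 then (-1)^k else 0) else (0::int)))"
  proof (rule sum.cong)
    fix k
    have m1: "(-1::int)^Suc k = - ((-1)^k)" by simp
    have "(2^Suc k - 1 = Suc n) = (even n \<and> 2^k - 1 = n div 2)"
      unfolding power_Suc using arith2[of "2^k" n] by simp
    then show "(if 2^(Suc k) - 1 = Suc n then (-1)^(Suc k) else (0::int)) =
       - (if even n then (if 2^k - 1 = n div 2 then (-1)^k else 0) else (0::int))"
      using m1 by (simp del: power_Suc split: if_split)
  qed simp
  also have "\<dots> = - (if even n then LL n (n div 2) else 0)"
    by (simp add: sum_negf LL_def)
  also have "\<dots> = - (if even n then LL (n div 2) (n div 2) else 0)"
    using LL_ext[of "n div 2" n] by simp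
  finally show ?thesis .
qed

definition FF :: "rat fps" where "FF = fps_int_to_rat lhs_series"

lemma FF_nth: "FF $ n = of_int (LL n n)"
  by (simp add: FF_def fps_int_to_rat_def lhs_series_def LL_def)

lemma FF_eq: "FF = 1 - fps_X * (FF oo fps_X^2)"
proof (rule fps_ext)
  fix n show "FF $ n = (1 - fps_X * (FF oo fps_X^2)) $ n"
  proof (cases n)
    case 0
    then show ?thesis by (simp add: FF_nth LL_def)
  next
    case (Suc m)
    then show ?thesis by (simp add: FF_nth LL_suc sq_nth)
  qed
qed

lemma main: "og N (FF - cf_trunc grs_c N)"
proof (induction N rule: less_induct)
  case (less N)
  show ?case
  proof (cases "N \<le> 1")
    case True
    have "og 1 (FF - cf_trunc grs_c N)"
      by (simp add: og_def FF_nth LL_def trunc0)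
    then show ?thesis using True by (rule og_mono)
  next
    case False
    define K where "K = N div 4 + 1"
    have K1: "K \<ge> 1" and ge: "N \<le> 4*K" and ge2: "N \<le> Suc (2*(2*K-1))"
      using False by (simp_all add: K_def)
    have lt: "2*K - 1 < N" using False unfolding K_def by presburger
    have ih: "og (2*K-1) (FF - cf_trunc grs_c (2*K-1))" using less.IH[OF lt] .
    have "FF - cf_trunc grs_c (4*K) = - (fps_X * ((FF - cf_trunc grs_c (2*K-1)) oo fps_X^2))"
      by (subst FF_eq, subst key[OF K1]) (simp add: fps_compose_sub_distrib algebra_simps)
    moreover have "og (Suc (2*(2*K-1))) (fps_X * ((FF - cf_trunc grs_c (2*K-1)) oo fps_X^2))"
      by (intro og_X og_sq ih)
    ultimately have a: "og N (FF - cf_trunc grs_c (4*K))"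
      using ge2 by (auto intro: og_minus og_mono)
    have b: "og N (cf_trunc grs_c (4*K) - cf_trunc grs_c N)"
      by (rule og_swap, rule trunc_mono[OF ge])
    from og_add[OF a b] show ?thesis by simp
  qed
qed

theorem corollary5p12:
  shows "(\<lambda>N. cf_trunc grs_c N) \<longlonglongrightarrow> fps_int_to_rat lhs_series"
  unfolding lim_sequentially FF_def[symmetric]
proof (intro allI impI)
  fix r :: real assume r: "r > 0"
  obtain n0 where n0: "(1/2)^n0 < r"
    using reals_power_lt_ex[OF r, of 2] by auto
  have "dist (cf_trunc grs_c n) FF < r" if "n \<ge> n0" for n
  proof (cases "cf_trunc grs_c n = FF")
    case True then show ?thesis using r by simp
  next
    case False
    have "og n (cf_trunc grs_c n - FF)" using main[of n] by (rule og_swap)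
    then have "subdegree (cf_trunc grs_c n - FF) \<ge> n"
      using False by (intro subdegree_geI) (auto simp: og_def)
    then have "dist (cf_trunc grs_c n) FF \<le> (1/2)^n"
      using False by (simp add: dist_fps_def power_one_over field_simps)
    also have "\<dots> \<le> (1/2)^n0" using that by (simp add: power_decreasing)
    finally show ?thesis using n0 by simp
  qed
  then show "\<exists>no. \<forall>n\<ge>no. dist (cf_trunc grs_c n) FF < r" by blast
qed

end
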